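(* Let $H$ be a separable complex Hilbert space, $\{v_j\}_{j\in\mathbb N}$ an orthonormal basis of $H$, $\{w_j\}_{j\in\mathbb N}$ a set of unit vectors in $H$, and $N\ge1$. Let $p_N'$ be the orthogonal projection onto $H_N'=\operatorname{span}\{v_1,\dots,v_N\}$, let $\tilde{\mathcal B}_N=\{p_N'(w_1),\dots,p_N'(w_N)\}\cup\{v_j\}_{j\ge N+1}$, and let $U_N'$ be the $N\times N$ matrix with entries $\langle p_N'(w_i),p_N'(w_j)\rangle$, $1\le i,j\le N$. Assume $\{p_N'(w_1),\dots,p_N'(w_N)\}$ is a basis of $H_N'$. Then $\tilde{\mathcal B}_N$ is a Riesz basis of $H$ with optimal frame constants $$\tilde B_N=\max_{\vec c\in\mathbb C^N,\ |\vec c|\le1}\big\{\langle U_N'\vec c,\vec c\rangle+1-|\vec c|^2\big\},\qquad \tilde A_N=\min_{\vec c\in\mathbb C^N,\ |\vec c|\le1}\big\{\langle U_N'\vec c,\vec c\rangle+1-|\vec c|^2\big\}.$$ Moreover, if $\Lambda_N$ and $\lambda_N$ denote the maximum and minimum eigenvalue of $U_N'$, then $\tilde B_N=\max\{\Lambda_N,1\}$ and $\tilde A_N=\lambda_N$.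
   Context: Here $|\vec c|$ is the Euclidean norm on $\mathbb C^N$. A Riesz basis is a sequence $\{u_j\}$ such that there are $0<A\le B<\infty$ with $A\|f\|^2\le\sum_j|\langle f,u_j\rangle|^2\le B\|f\|^2$ for all $f\in H$ and $A\sum|a_j|^2\le\|\sum a_ju_j\|^2\le B\sum|a_j|^2$ for all finite coefficient sequences; its optimal frame constants are the largest such $A$ and smallest such $B$. *)

theory Defs
  imports "HOL-Analysis.Infinite_Sum" "Jordan_Normal_Form.Char_Poly"
begin

text \<open>Convention: the inner product is linear in the first
  argument and conjugate-linear in the second.\<close>

class complex_vector = real_vector +
  fixes scaleC :: "complex \<Rightarrow> 'a \<Rightarrow> 'a" (infixr \<open>*\<^sub>C\<close> 75)
  assumes scaleC_add_right: "a *\<^sub>C (x + y) = a *\<^sub>C x + a *\<^sub>C y"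
    and scaleC_add_left: "(a + b) *\<^sub>C x = a *\<^sub>C x + b *\<^sub>C x"
    and scaleC_scaleC: "a *\<^sub>C (b *\<^sub>C x) = (a * b) *\<^sub>C x"
    and scaleC_one: "1 *\<^sub>C x = x"
    and scaleR_scaleC: "r *\<^sub>R x = complex_of_real r *\<^sub>C x"

class complex_inner = complex_vector + real_normed_vector +
  fixes cinner :: "'a \<Rightarrow> 'a \<Rightarrow> complex"
  assumes cinner_conj_commute: "cinner x y = cnj (cinner y x)"
    and cinner_add_left: "cinner (x + y) z = cinner x z + cinner y z"
    and cinner_scaleC_left: "cinner (a *\<^sub>C x) y = a * cinner x y"
    and cinner_Re_nonneg: "0 \<le> Re (cinner x x)"
    and cinner_eq_zero_iff: "cinner x x = 0 \<longleftrightarrow> x = 0"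
    and norm_eq_sqrt_cinner: "norm x = sqrt (Re (cinner x x))"

class chilbert_space = complex_inner + complete_space

definition cspan :: "'a::complex_vector set \<Rightarrow> 'a set" where
  "cspan S = {x. \<exists>F a. finite F \<and> F \<subseteq> S \<and> x = (\<Sum>s\<in>F. a s *\<^sub>C s)}"

definition orthonormal_basis :: "(nat \<Rightarrow> 'a::complex_inner) \<Rightarrow> bool" where
  "orthonormal_basis v \<longleftrightarrow>
     (\<forall>i j. cinner (v i) (v j) = (if i = j then 1 else 0)) \<and>
     closure (cspan (range v)) = UNIV"

definition orth_proj :: "'a::complex_inner set \<Rightarrow> 'a \<Rightarrow> 'a" where
  "orth_proj M x = (THE y. y \<in> M \<and> (\<forall>m\<in>M. cinner (x - y) m = 0))"

definition is_finite_basis_of :: "nat \<Rightarrow> (nat \<Rightarrow> 'a::complex_vector) \<Rightarrow> 'a set \<Rightarrow> bool" where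
  "is_finite_basis_of n x M \<longleftrightarrow>
     (\<forall>a. (\<Sum>i<n. a i *\<^sub>C x i) = 0 \<longrightarrow> (\<forall>i<n. a i = 0)) \<and>
     cspan (x ` {..<n}) = M"

definition riesz_bounds :: "(nat \<Rightarrow> 'a::complex_inner) \<Rightarrow> real \<Rightarrow> real \<Rightarrow> bool" where
  "riesz_bounds u A B \<longleftrightarrow> 0 < A \<and> A \<le> B \<and>
     (\<forall>f. (\<lambda>j. (cmod (cinner f (u j)))\<^sup>2) summable_on UNIV \<and>
          A * (norm f)\<^sup>2 \<le> (\<Sum>\<^sub>\<infinity>j. (cmod (cinner f (u j)))\<^sup>2) \<and>
          (\<Sum>\<^sub>\<infinity>j. (cmod (cinner f (u j)))\<^sup>2) \<le> B * (norm f)\<^sup>2) \<and>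
     (\<forall>F a. finite F \<longrightarrow>
          A * (\<Sum>j\<in>F. (cmod (a j))\<^sup>2) \<le> (norm (\<Sum>j\<in>F. a j *\<^sub>C u j))\<^sup>2 \<and>
          (norm (\<Sum>j\<in>F. a j *\<^sub>C u j))\<^sup>2 \<le> B * (\<Sum>j\<in>F. (cmod (a j))\<^sup>2))"

definition riesz_basis :: "(nat \<Rightarrow> 'a::complex_inner) \<Rightarrow> bool" where
  "riesz_basis u \<longleftrightarrow> (\<exists>A B. riesz_bounds u A B)"

definition optimal_lower_constant :: "(nat \<Rightarrow> 'a::complex_inner) \<Rightarrow> real \<Rightarrow> bool" where
  "optimal_lower_constant u A \<longleftrightarrow>
     (\<exists>B. riesz_bounds u A B) \<and> (\<forall>A' B'. riesz_bounds u A' B' \<longrightarrow> A' \<le> A)"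

definition optimal_upper_constant :: "(nat \<Rightarrow> 'a::complex_inner) \<Rightarrow> real \<Rightarrow> bool" where
  "optimal_upper_constant u B \<longleftrightarrow>
     (\<exists>A. riesz_bounds u A B) \<and> (\<forall>A' B'. riesz_bounds u A' B' \<longrightarrow> B \<le> B')"

end

theory Submission
  imports Defs "HOL-Analysis.Elementary_Metric_Spaces" "HOL-Analysis.Function_Topology"
begin

lemma scaleC_zero_right[simp]: "a *\<^sub>C (0::'a::complex_vector) = 0"
proof -
  have "a *\<^sub>C 0 + a *\<^sub>C 0 = a *\<^sub>C (0::'a) + 0"
    using scaleC_add_right[of a "0::'a" 0] by simp
  then show ?thesis by simp
qed
lemma scaleC_zero_left[simp]: "0 *\<^sub>C (x::'a::complex_vector) = 0"
proof -
  have "0 *\<^sub>C x + 0 *\<^sub>C x = 0 *\<^sub>C x + (0::'a)"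
    using scaleC_add_left[of 0 0 x] by simp
  then show ?thesis by simp
qed
lemma scaleC_minus_right: "a *\<^sub>C (- x::'a::complex_vector) = - (a *\<^sub>C x)"
proof -
  have "a *\<^sub>C (- x) + a *\<^sub>C x = 0"
    using scaleC_add_right[of a "-x" x] by simp
  then show ?thesis by (simp add: eq_neg_iff_add_eq_0)
qed
lemma scaleC_diff_right: "a *\<^sub>C (x - y::'a::complex_vector) = a *\<^sub>C x - a *\<^sub>C y"
  using scaleC_add_right[of a x "-y"] by (simp add: scaleC_minus_right)
lemma scaleC_minus_left: "(- a) *\<^sub>C (x::'a::complex_vector) = - (a *\<^sub>C x)"
proof -
  have "(- a) *\<^sub>C x + a *\<^sub>C x = 0"
    using scaleC_add_left[of "-a" a x] by simp
  then show ?thesis by (simp add: eq_neg_iff_add_eq_0)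
qed
lemma scaleC_diff_left: "(a - b) *\<^sub>C (x::'a::complex_vector) = a *\<^sub>C x - b *\<^sub>C x"
  using scaleC_add_left[of a "-b" x] by (simp add: scaleC_minus_left)
lemma scaleC_sum_right: "a *\<^sub>C (\<Sum>i\<in>A. f i) = (\<Sum>i\<in>A. a *\<^sub>C (f i::'a::complex_vector))"
  by (induct A rule: infinite_finite_induct) (simp_all add: scaleC_add_right)
lemma scaleC_sum_left: "(\<Sum>i\<in>A. f i) *\<^sub>C (x::'a::complex_vector) = (\<Sum>i\<in>A. f i *\<^sub>C x)"
  by (induct A rule: infinite_finite_induct) (simp_all add: scaleC_add_left)

lemma cinner_add_right: "cinner x (y + z) = cinner x y + cinner (x::'a::complex_inner) z"
  by (subst (1 2 3) cinner_conj_commute) (simp add: cinner_add_left)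
lemma cinner_scaleC_right: "cinner x (a *\<^sub>C y) = cnj a * cinner (x::'a::complex_inner) y"
  by (subst (1 2) cinner_conj_commute) (simp add: cinner_scaleC_left)
lemma cinner_zero_left[simp]: "cinner 0 (y::'a::complex_inner) = 0"
  using cinner_scaleC_left[of 0 y y] by simp
lemma cinner_zero_right[simp]: "cinner (y::'a::complex_inner) 0 = 0"
  using cinner_scaleC_right[of y 0 y] by simp
lemma cinner_minus_left: "cinner (- x) (y::'a::complex_inner) = - cinner x y"
  using cinner_add_left[of "-x" x y] by (simp add: eq_neg_iff_add_eq_0)
lemma cinner_minus_right: "cinner y (- x::'a::complex_inner) = - cinner y x"
  using cinner_add_right[of y "-x" x] by (simp add: eq_neg_iff_add_eq_0)
lemma cinner_diff_left: "cinner (x - z) (y::'a::complex_inner) = cinner x y - cinner z y"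
  using cinner_add_left[of x "-z" y] by (simp add: cinner_minus_left)
lemma cinner_diff_right: "cinner y (x - z::'a::complex_inner) = cinner y x - cinner y z"
  using cinner_add_right[of y x "-z"] by (simp add: cinner_minus_right)
lemma cinner_sum_left: "cinner (\<Sum>i\<in>A. f i) (y::'a::complex_inner) = (\<Sum>i\<in>A. cinner (f i) y)"
  by (induct A rule: infinite_finite_induct) (simp_all add: cinner_add_left)
lemma cinner_sum_right: "cinner y (\<Sum>i\<in>A. f i) = (\<Sum>i\<in>A. cinner (y::'a::complex_inner) (f i))"
  by (induct A rule: infinite_finite_induct) (simp_all add: cinner_add_right)


lemma cinner_self: "cinner x x = complex_of_real ((norm (x::'a::complex_inner))\<^sup>2)"
proof -
  have "Im (cinner x x) = - Im (cinner x x)"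
    using arg_cong[OF cinner_conj_commute[of x x], of Im] by simp
  then have "Im (cinner x x) = 0" by simp
  moreover have "Re (cinner x x) = (norm x)\<^sup>2" by (simp add: norm_eq_sqrt_cinner cinner_Re_nonneg)
  ultimately show ?thesis by (simp add: complex_eq_iff)
qed

lemma norm_sq_Re: "(norm (x::'a::complex_inner))\<^sup>2 = Re (cinner x x)"
  by (simp add: cinner_self)

lemma norm_scaleC: "norm (a *\<^sub>C (x::'a::complex_inner)) = cmod a * norm x"
proof -
  have "cinner (a *\<^sub>C x) (a *\<^sub>C x) = a * cnj a * cinner x x"
    by (simp add: cinner_scaleC_left cinner_scaleC_right)
  also have "\<dots> = of_real ((cmod a * norm x)\<^sup>2)"
    by (simp add: cinner_self complex_mult_cnj cmod_power2 power_mult_distrib)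
  finally have "(norm (a *\<^sub>C x))\<^sup>2 = (cmod a * norm x)\<^sup>2"
    by (simp add: norm_sq_Re)
  then show ?thesis by (simp add: power2_eq_iff_nonneg)
qed

lemma cauchy_schwarz: "cmod (cinner x y) \<le> norm x * norm (y::'a::complex_inner)"
proof (cases "y = 0")
  case True then show ?thesis by simp
next
  case False
  define t where "t = cinner x y / cinner y y"
  have yy: "cinner y y = of_real ((norm y)\<^sup>2)" by (rule cinner_self)
  have ny: "norm y > 0" using False by simp
  have zy: "cinner (x - t *\<^sub>C y) y = 0"
    using ny by (simp add: cinner_diff_left cinner_scaleC_left t_def yy)
  have "cinner (x - t *\<^sub>C y) (x - t *\<^sub>C y) = cinner (x - t *\<^sub>C y) x"
    by (simp add: cinner_diff_right cinner_scaleC_right zy)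
  also have "\<dots> = cinner x x - t * cnj (cinner x y)"
    by (simp add: cinner_diff_left cinner_scaleC_left flip: cinner_conj_commute)
  also have "t * cnj (cinner x y) = of_real ((cmod (cinner x y))\<^sup>2 / (norm y)\<^sup>2)"
    by (simp add: t_def yy complex_mult_cnj cmod_power2)
  finally have "cinner (x - t *\<^sub>C y) (x - t *\<^sub>C y) = of_real ((norm x)\<^sup>2 - (cmod (cinner x y))\<^sup>2 / (norm y)\<^sup>2)"
    by (simp add: cinner_self)
  then have "0 \<le> (norm x)\<^sup>2 - (cmod (cinner x y))\<^sup>2 / (norm y)\<^sup>2"
    by (metis Re_complex_of_real cinner_Re_nonneg)
  then have "(cmod (cinner x y))\<^sup>2 \<le> (norm x * norm y)\<^sup>2"
    using ny by (simp add: field_simps power_mult_distrib)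
  then show ?thesis by (simp add: power2_le_iff_abs_le)
qed

definition ONS :: "(nat \<Rightarrow> 'a::complex_inner) \<Rightarrow> bool" where
  "ONS v \<longleftrightarrow> (\<forall>i j. cinner (v i) (v j) = (if i = j then 1 else 0))"

lemma pythagoras: "cinner a b = 0 \<Longrightarrow> (norm (a + b::'a::complex_inner))\<^sup>2 = (norm a)\<^sup>2 + (norm b)\<^sup>2"
proof -
  assume h: "cinner a b = 0"
  have h2: "cinner b a = 0" using cinner_conj_commute[of b a] h by simp
  have "cinner (a+b) (a+b) = cinner a a + cinner b b"
    by (simp add: cinner_add_left cinner_add_right h h2)
  then show ?thesis by (simp add: norm_sq_Re)
qed

lemma ons_sum_inner:
  assumes "ONS v" "finite K"
  shows "cinner (\<Sum>k\<in>K. b k *\<^sub>C v k) (\<Sum>k\<in>K. c k *\<^sub>C v k) = (\<Sum>k\<in>K. b k * cnj (c k))"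
proof -
  have "cinner (\<Sum>k\<in>K. b k *\<^sub>C v k) (\<Sum>k\<in>K. c k *\<^sub>C v k)
      = (\<Sum>j\<in>K. \<Sum>i\<in>K. b i * (cnj (c j) * (if i = j then 1 else 0)))"
    using assms(1) unfolding ONS_def
    by (simp add: cinner_sum_left cinner_sum_right cinner_scaleC_left cinner_scaleC_right
        sum_distrib_left mult_ac)
  also have "\<dots> = (\<Sum>j\<in>K. \<Sum>i\<in>K. if i = j then b i * cnj (c j) else 0)"
    by (intro sum.cong refl) simp
  also have "\<dots> = (\<Sum>k\<in>K. b k * cnj (c k))"
    using assms(2) by (simp add: sum.delta')
  finally show ?thesis .
qed

lemma ons_sum_norm:
  assumes "ONS v" "finite K"
  shows "(norm (\<Sum>k\<in>K. b k *\<^sub>C v k))\<^sup>2 = (\<Sum>k\<in>K. (cmod (b k))\<^sup>2)"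
proof -
  have "(norm (\<Sum>k\<in>K. b k *\<^sub>C v k))\<^sup>2 = Re (\<Sum>k\<in>K. b k * cnj (b k))"
    by (simp add: norm_sq_Re ons_sum_inner[OF assms])
  also have "\<dots> = (\<Sum>k\<in>K. (cmod (b k))\<^sup>2)"
    by (simp add: complex_mult_cnj cmod_power2)
  finally show ?thesis .
qed

lemma ons_sum_inner_v:
  assumes "ONS v" "finite K"
  shows "cinner (\<Sum>k\<in>K. b k *\<^sub>C v k) (v j) = (if j \<in> K then b j else 0)"
proof -
  have "cinner (\<Sum>k\<in>K. b k *\<^sub>C v k) (v j) = (\<Sum>k\<in>K. b k * (if k = j then 1 else 0))"
    using assms(1) unfolding ONS_def
    by (simp add: cinner_sum_left cinner_scaleC_left)
  also have "\<dots> = (\<Sum>k\<in>K. if k = j then b k else 0)"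
    by (intro sum.cong refl) simp
  finally show ?thesis using assms(2) by (simp add: sum.delta')
qed

lemma orth_sum:
  assumes "\<And>k. k \<in> K \<Longrightarrow> cinner z (v k) = 0"
  shows "cinner z (\<Sum>k\<in>K. b k *\<^sub>C v k) = 0"
  using assms by (simp add: cinner_sum_right cinner_scaleC_right)

definition projK :: "(nat \<Rightarrow> 'a::complex_inner) \<Rightarrow> nat set \<Rightarrow> 'a \<Rightarrow> 'a" where
  "projK v K x = (\<Sum>k\<in>K. cinner x (v k) *\<^sub>C v k)"

lemma projK_orth:
  assumes "ONS v" "finite K" "j \<in> K"
  shows "cinner (x - projK v K x) (v j) = 0"
  using assms ons_sum_inner_v[OF assms(1,2), of "\<lambda>k. cinner x (v k)" j]
  by (simp add: projK_def cinner_diff_left)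

lemma projK_norm:
  assumes "ONS v" "finite K"
  shows "(norm (projK v K x))\<^sup>2 = (\<Sum>k\<in>K. (cmod (cinner x (v k)))\<^sup>2)"
  unfolding projK_def by (rule ons_sum_norm[OF assms])

lemma projK_pyth:
  assumes "ONS v" "finite K"
  shows "(norm x)\<^sup>2 = (norm (x - projK v K x))\<^sup>2 + (\<Sum>k\<in>K. (cmod (cinner x (v k)))\<^sup>2)"
proof -
  have "cinner (x - projK v K x) (projK v K x) = 0"
    unfolding projK_def[of v K x] by (rule orth_sum) (use projK_orth[OF assms] in \<open>auto simp: projK_def\<close>)
  from pythagoras[OF this] show ?thesis by (simp add: projK_norm[OF assms])
qed

lemma bessel:
  assumes "ONS v" "finite K"
  shows "(\<Sum>k\<in>K. (cmod (cinner x (v k)))\<^sup>2) \<le> (norm x)\<^sup>2"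
  using projK_pyth[OF assms, of x] by simp

lemma best_approx:
  assumes "ONS v" "finite K"
  shows "norm (x - projK v K x) \<le> norm (x - (\<Sum>k\<in>K. b k *\<^sub>C v k))"
proof -
  have d: "(\<Sum>k\<in>K. (cinner x (v k) - b k) *\<^sub>C v k) = projK v K x - (\<Sum>k\<in>K. b k *\<^sub>C v k)"
    unfolding projK_def scaleC_diff_left sum_subtractf ..
  have e: "x - (\<Sum>k\<in>K. b k *\<^sub>C v k) = (x - projK v K x) + (\<Sum>k\<in>K. (cinner x (v k) - b k) *\<^sub>C v k)"
    unfolding d by simp
  have "cinner (x - projK v K x) (\<Sum>k\<in>K. (cinner x (v k) - b k) *\<^sub>C v k) = 0"
    by (rule orth_sum) (use projK_orth[OF assms] in \<open>auto simp: projK_def\<close>)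
  from pythagoras[OF this] have "(norm (x - (\<Sum>k\<in>K. b k *\<^sub>C v k)))\<^sup>2 = (norm (x - projK v K x))\<^sup>2 + (norm (\<Sum>k\<in>K. (cinner x (v k) - b k) *\<^sub>C v k))\<^sup>2"
    by (simp only: e[symmetric])
  then have "(norm (x - (\<Sum>k\<in>K. b k *\<^sub>C v k)))\<^sup>2 \<ge> (norm (x - projK v K x))\<^sup>2"
    by simp
  then show ?thesis by (simp add: power2_le_iff_abs_le)
qed

lemma ons_inj: assumes o: "ONS v" shows "inj v"
proof (rule injI)
  fix i j assume e: "v i = v j"
  have "cinner (v i) (v i) = 1" using o unfolding ONS_def by simp
  then have "cinner (v i) (v j) = 1" using e by simp
  then show "i = j" using o unfolding ONS_def by (simp split: if_splits)
qed

lemma cspan_range_repr: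
  assumes "ONS v" "g \<in> cspan (range v)"
  shows "\<exists>K b. finite K \<and> g = (\<Sum>k\<in>K. b k *\<^sub>C v k)"
proof -
  have "\<exists>F a. finite F \<and> F \<subseteq> range v \<and> g = (\<Sum>s\<in>F. a s *\<^sub>C s)"
    using assms(2) unfolding cspan_def by simp
  then obtain F a where F: "finite F" "F \<subseteq> range v" "g = (\<Sum>s\<in>F. a s *\<^sub>C s)"
    by blast
  define K where "K = v -` F"
  have inj: "inj v" using ons_inj[OF assms(1)] .
  have FK: "F = v ` K" using F(2) unfolding K_def image_vimage_eq by blast
  have fK: "finite K" unfolding K_def using F(1) inj by (rule finite_vimageI)
  have "g = (\<Sum>s\<in>v ` K. a s *\<^sub>C s)" using F(3) FK by simp
  also have "\<dots> = (\<Sum>k\<in>K. a (v k) *\<^sub>C v k)"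
    by (rule sum.reindex_cong[OF inj_on_subset[OF inj subset_UNIV] refl]) simp
  finally have "g = (\<Sum>k\<in>K. a (v k) *\<^sub>C v k)" .
  then show ?thesis using fK by (intro exI[of _ K] exI[of _ "\<lambda>k. a (v k)"]) simp
qed

lemma parseval:
  assumes ons: "ONS v" and dense: "closure (cspan (range v)) = UNIV"
  shows "(\<lambda>j. (cmod (cinner f (v j)))\<^sup>2) summable_on UNIV"
    and "(\<Sum>\<^sub>\<infinity>j. (cmod (cinner f (v j)))\<^sup>2) = (norm f)\<^sup>2"
proof -
  let ?h = "\<lambda>j. (cmod (cinner f (v j)))\<^sup>2"
  show sm: "?h summable_on UNIV"
    by (rule nonneg_bdd_above_summable_on) (auto intro!: bdd_aboveI[where M="(norm f)\<^sup>2"] bessel[OF ons])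
  have le: "infsum ?h UNIV \<le> (norm f)\<^sup>2"
    by (rule infsum_le_finite_sums[OF sm]) (rule bessel[OF ons])
  have ge: "(norm f)\<^sup>2 - e\<^sup>2 \<le> infsum ?h UNIV" if e: "e > 0" for e
  proof -
    have "f \<in> closure (cspan (range v))" using dense by simp
    then obtain g where g: "g \<in> cspan (range v)" "dist g f < e"
      using e closure_approachable by blast
    obtain K b where K: "finite K" "g = (\<Sum>k\<in>K. b k *\<^sub>C v k)"
      using cspan_range_repr[OF ons g(1)] by blast
    have "norm (f - projK v K f) \<le> norm (f - g)" using best_approx[OF ons K(1)] K(2) by simp
    also have "\<dots> < e" using g(2) by (simp add: dist_norm norm_minus_commute)
    finally have "(norm (f - projK v K f))\<^sup>2 \<le> e\<^sup>2"
      by (simp add: power_mono)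
    then have "(norm f)\<^sup>2 - e\<^sup>2 \<le> sum ?h K" using projK_pyth[OF ons K(1), of f] by simp
    also have "\<dots> \<le> infsum ?h UNIV"
      by (rule finite_sum_le_infsum[OF sm K(1)]) auto
    finally show ?thesis .
  qed
  have "(norm f)\<^sup>2 \<le> infsum ?h UNIV"
  proof (rule field_le_epsilon)
    fix d :: real assume "d > 0"
    then show "(norm f)\<^sup>2 \<le> infsum ?h UNIV + d"
      using ge[of "sqrt d"] by simp
  qed
  with le show "infsum ?h UNIV = (norm f)\<^sup>2" by simp
qed

lemma span_repr:
  assumes "finite K" "g \<in> cspan (x ` K)"
  shows "\<exists>e. g = (\<Sum>i\<in>K. e i *\<^sub>C (x i::'a::complex_vector))"
proof -
  have "\<exists>F a. finite F \<and> F \<subseteq> x ` K \<and> g = (\<Sum>s\<in>F. a s *\<^sub>C s)"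
    using assms(2) unfolding cspan_def by simp
  then obtain F a where F: "finite F" "F \<subseteq> x ` K" "g = (\<Sum>s\<in>F. a s *\<^sub>C s)"
    by blast
  define \<phi> where "\<phi> = inv_into K x"
  have xphi: "x (\<phi> s) = s" if "s \<in> F" for s
    unfolding \<phi>_def using F(2) that by (simp add: f_inv_into_f subset_eq)
  have injphi: "inj_on \<phi> F" by (rule inj_on_inverseI[where g = x]) (rule xphi)
  have phiK: "\<phi> ` F \<subseteq> K" unfolding \<phi>_def using F(2) by (auto intro: inv_into_into)
  define e where "e = (\<lambda>i. if i \<in> \<phi> ` F then a (x i) else 0)"
  have "(\<Sum>i\<in>K. e i *\<^sub>C x i) = (\<Sum>i\<in>\<phi> ` F. e i *\<^sub>C x i)"
    by (rule sum.mono_neutral_right[OF assms(1) phiK]) (simp add: e_def)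
  also have "\<dots> = (\<Sum>i\<in>\<phi> ` F. a (x i) *\<^sub>C x i)"
    by (rule sum.cong) (simp_all add: e_def)
  also have "\<dots> = (\<Sum>s\<in>F. a (x (\<phi> s)) *\<^sub>C x (\<phi> s))"
    by (rule sum.reindex[OF injphi, unfolded comp_def])
  also have "\<dots> = (\<Sum>s\<in>F. a s *\<^sub>C s)"
    by (rule sum.cong) (simp_all add: xphi)
  finally show ?thesis using F(3) by (intro exI[of _ e]) simp
qed

lemma span_mem:
  assumes "finite K" "inj_on x K"
  shows "(\<Sum>i\<in>K. e i *\<^sub>C (x i::'a::complex_vector)) \<in> cspan (x ` K)"
proof -
  define a where "a = (\<lambda>s. e (inv_into K x s))"
  have "(\<Sum>s\<in>x ` K. a s *\<^sub>C s) = (\<Sum>i\<in>K. a (x i) *\<^sub>C x i)"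
    by (rule sum.reindex[OF assms(2), unfolded comp_def])
  also have "\<dots> = (\<Sum>i\<in>K. e i *\<^sub>C x i)"
    by (rule sum.cong) (simp_all add: a_def inv_into_f_f[OF assms(2)])
  finally have "(\<Sum>i\<in>K. e i *\<^sub>C x i) = (\<Sum>s\<in>x ` K. a s *\<^sub>C s)" by simp
  then show ?thesis unfolding cspan_def using assms(1)
    by (intro CollectI exI[of _ "x ` K"] exI[of _ a]) simp
qed

lemma sum_scaleC_diff: "(\<Sum>i\<in>K. e i *\<^sub>C x i) - (\<Sum>i\<in>K. f i *\<^sub>C x i) = (\<Sum>i\<in>K. (e i - f i) *\<^sub>C (x i::'a::complex_vector))"
  by (simp add: scaleC_diff_left sum_subtractf)

lemma orth_proj_eq:
  assumes ons: "ONS v" and K: "finite K"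
  shows "orth_proj (cspan (v ` K)) y = projK v K y"
proof -
  let ?M = "cspan (v ` K)"
  have injK: "inj_on v K" using ons_inj[OF ons] by (rule inj_on_subset) simp
  have orthM: "cinner (y - projK v K y) m = 0" if mM: "m \<in> ?M" for m
  proof -
    obtain b where "m = (\<Sum>k\<in>K. b k *\<^sub>C v k)" using span_repr[OF K mM] by blast
    then show ?thesis by (simp only:) (rule orth_sum, rule projK_orth[OF ons K])
  qed
  have inM: "projK v K y \<in> ?M" unfolding projK_def by (rule span_mem[OF K injK])
  show ?thesis unfolding orth_proj_def
  proof (rule the_equality)
    show "projK v K y \<in> ?M \<and> (\<forall>m\<in>?M. cinner (y - projK v K y) m = 0)" using inM orthM by blast
  next
    fix z assume z: "z \<in> ?M \<and> (\<forall>m\<in>?M. cinner (y - z) m = 0)"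
    obtain b where b: "z = (\<Sum>k\<in>K. b k *\<^sub>C v k)" using span_repr[OF K] z by blast
    define d where "d = z - projK v K y"
    have dM: "d \<in> ?M" unfolding d_def b projK_def sum_scaleC_diff by (rule span_mem[OF K injK])
    have "d = (y - projK v K y) - (y - z)" unfolding d_def by simp
    then have "cinner d d = cinner (y - projK v K y) d - cinner (y - z) d"
      by (metis cinner_diff_left)
    also have "\<dots> = 0" using orthM[OF dM] z dM by simp
    finally have "d = 0" using cinner_eq_zero_iff by blast
    then show "z = projK v K y" unfolding d_def by simp
  qed
qed

definition Sx :: "(nat \<Rightarrow> 'a::complex_inner) \<Rightarrow> nat \<Rightarrow> (nat \<Rightarrow> complex) \<Rightarrow> 'a" where
  "Sx x N d = (\<Sum>i<N. d i *\<^sub>C x i)"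
definition nrm2 :: "nat \<Rightarrow> (nat \<Rightarrow> complex) \<Rightarrow> real" where
  "nrm2 N d = (\<Sum>i<N. (cmod (d i))\<^sup>2)"
definition GG :: "(nat \<Rightarrow> 'a::complex_inner) \<Rightarrow> nat \<Rightarrow> (nat \<Rightarrow> complex) \<Rightarrow> real" where
  "GG x N d = (norm (Sx x N d))\<^sup>2"

lemma inner_Sx: "cinner (Sx x N d) (Sx x N e) = (\<Sum>i<N. \<Sum>j<N. d i * cnj (e j) * cinner (x i) (x j))"
  unfolding Sx_def
  by (simp add: cinner_sum_left cinner_sum_right cinner_scaleC_left cinner_scaleC_right
      sum_distrib_left mult.assoc; subst sum.swap; simp add: mult_ac)

lemma GG_formula: "GG x N d = Re (\<Sum>i<N. \<Sum>j<N. d i * cnj (d j) * cinner (x i) (x j))"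
  unfolding GG_def norm_sq_Re inner_Sx ..

lemma Sx_lin: "Sx x N (\<lambda>i. d i + t * e i) = Sx x N d + t *\<^sub>C Sx x N e"
  unfolding Sx_def by (simp add: scaleC_add_left scaleC_sum_right scaleC_scaleC sum.distrib)

lemma Sx_scale: "Sx x N (\<lambda>i. t * e i) = t *\<^sub>C Sx x N e"
  unfolding Sx_def by (simp add: scaleC_sum_right scaleC_scaleC)

lemma Sx_cong: "(\<And>i. i < N \<Longrightarrow> d i = e i) \<Longrightarrow> Sx x N d = Sx x N e"
  unfolding Sx_def by (rule sum.cong) auto

lemma nrm2_cong: "(\<And>i. i < N \<Longrightarrow> d i = e i) \<Longrightarrow> nrm2 N d = nrm2 N e"
  unfolding nrm2_def by (rule sum.cong) auto

lemma GG_expand: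
  "GG x N (\<lambda>i. d i + complex_of_real t * e i)
     = GG x N d + 2 * t * Re (cinner (Sx x N d) (Sx x N e)) + t\<^sup>2 * GG x N e"
proof -
  let ?a = "Sx x N d" and ?b = "Sx x N e"
  have "cinner (?a + of_real t *\<^sub>C ?b) (?a + of_real t *\<^sub>C ?b)
        = cinner ?a ?a + of_real t * cinner ?a ?b + of_real t * cinner ?b ?a + of_real t * of_real t * cinner ?b ?b"
    by (simp add: cinner_add_left cinner_add_right cinner_scaleC_left cinner_scaleC_right algebra_simps)
  moreover have "Re (cinner ?b ?a) = Re (cinner ?a ?b)"
    by (subst cinner_conj_commute) simp
  ultimately show ?thesis
    unfolding GG_def norm_sq_Re Sx_lin by (simp add: power2_eq_square)
qed

lemma cmod_expand: "(cmod (a + complex_of_real t * b))\<^sup>2 = (cmod a)\<^sup>2 + 2 * t * Re (a * cnj b) + t\<^sup>2 * (cmod b)\<^sup>2"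
  unfolding cmod_power2 by (simp add: power2_eq_square algebra_simps)

lemma nrm2_expand:
  "nrm2 N (\<lambda>i. d i + complex_of_real t * e i)
     = nrm2 N d + 2 * t * Re (\<Sum>i<N. d i * cnj (e i)) + t\<^sup>2 * nrm2 N e"
proof -
  have 1: "(\<Sum>i<N. 2 * t * Re (d i * cnj (e i))) = 2 * t * Re (\<Sum>i<N. d i * cnj (e i))"
    unfolding Re_sum sum_distrib_left ..
  have 2: "(\<Sum>i<N. t\<^sup>2 * (cmod (e i))\<^sup>2) = t\<^sup>2 * (\<Sum>i<N. (cmod (e i))\<^sup>2)"
    unfolding sum_distrib_left ..
  show ?thesis unfolding nrm2_def cmod_expand sum.distrib 1 2 ..
qed

lemma quad_zero:
  fixes a b :: real
  assumes "\<And>t. 0 \<le> a * t + b * t\<^sup>2"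
  shows "a = 0"
proof (rule ccontr)
  assume a: "a \<noteq> 0"
  define c where "c = \<bar>b\<bar> + 1"
  have c: "c > 0" "\<bar>b\<bar> \<le> c" unfolding c_def by auto
  define t where "t = - a / (2 * c)"
  have "a * t + b * t\<^sup>2 \<le> a * t + c * t\<^sup>2"
    using c by (intro add_left_mono mult_right_mono) auto
  also have "\<dots> = - a\<^sup>2 / (4 * c)"
    using c unfolding t_def by (simp add: field_simps power2_eq_square)
  also have "\<dots> < 0" using a c by (simp add: field_simps)
  finally show False using assms[of t] by simp
qed

lemma variational:
  fixes s m :: real
  assumes s: "s \<noteq> 0" and q: "\<And>d. 0 \<le> s * (GG x N d - m * nrm2 N d)"
    and d0: "GG x N d0 = m * nrm2 N d0"
  shows "cinner (Sx x N d0) (Sx x N e) = of_real m * (\<Sum>i<N. d0 i * cnj (e i))"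
proof -
  define B where "B = (\<lambda>e. cinner (Sx x N d0) (Sx x N e) - of_real m * (\<Sum>i<N. d0 i * cnj (e i)))"
  have ReB: "Re (B e) = 0" for e
  proof -
    have "0 \<le> (2 * s * Re (B e)) * t + (s * (GG x N e - m * nrm2 N e)) * t\<^sup>2" for t
    proof -
      have "0 \<le> s * (GG x N (\<lambda>i. d0 i + complex_of_real t * e i) - m * nrm2 N (\<lambda>i. d0 i + complex_of_real t * e i))"
        by (rule q)
      also have "\<dots> = (2 * s * Re (B e)) * t + (s * (GG x N e - m * nrm2 N e)) * t\<^sup>2"
        unfolding GG_expand nrm2_expand B_def using d0 by (simp add: algebra_simps)
      finally show ?thesis .
    qed
    from quad_zero[OF this] s show ?thesis by simp
  qed
  have Bi: "B (\<lambda>i. \<i> * e i) = - \<i> * B e"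
    unfolding B_def Sx_scale by (simp add: cinner_scaleC_right sum_distrib_left algebra_simps)
  have "Im (B e) = 0" using ReB[of "\<lambda>i. \<i> * e i"] unfolding Bi by simp
  with ReB[of e] have "B e = 0" by (simp add: complex_eq_iff)
  then show ?thesis unfolding B_def by simp
qed

lemma coord_cont[continuous_intros]: "continuous_on S (\<lambda>d::nat\<Rightarrow>complex. d i)"
  by (rule continuous_on_subset[OF continuous_on_product_coordinates]) simp

lemma GG_cont: "continuous_on S (GG x N)"
proof -
  have "GG x N = (\<lambda>d. Re (\<Sum>i<N. \<Sum>j<N. d i * cnj (d j) * cinner (x i) (x j)))"
    by (rule ext) (rule GG_formula)
  moreover have "continuous_on S (\<lambda>d. Re (\<Sum>i<N. \<Sum>j<N. d i * cnj (d j) * cinner (x i) (x j)))"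
    by (intro continuous_intros)
  ultimately show ?thesis by simp
qed

lemma nrm2_cont: "continuous_on S (nrm2 N)"
proof -
  have "nrm2 N = (\<lambda>d. \<Sum>i<N. (cmod (d i))\<^sup>2)" by (rule ext) (simp add: nrm2_def)
  moreover have "continuous_on S (\<lambda>d. \<Sum>i<N. (cmod (d i))\<^sup>2)"
    by (intro continuous_intros)
  ultimately show ?thesis by simp
qed

lemma nrm2_nonneg: "0 \<le> nrm2 N d" unfolding nrm2_def by (simp add: sum_nonneg)

lemma nrm2_zero: "nrm2 N d = 0 \<Longrightarrow> i < N \<Longrightarrow> d i = 0"
  unfolding nrm2_def by (subst (asm) sum_nonneg_eq_0_iff) auto

lemma GG_nrm2_zero: "nrm2 N d = 0 \<Longrightarrow> GG x N d = 0"
proof -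
  assume "nrm2 N d = 0"
  then have "Sx x N d = Sx x N (\<lambda>i. 0)" by (intro Sx_cong) (simp add: nrm2_zero)
  then show ?thesis by (simp add: GG_def Sx_def)
qed

lemma GG_scale: "GG x N (\<lambda>i. c * d i) = (cmod c)\<^sup>2 * GG x N d"
  unfolding GG_def Sx_scale norm_scaleC by (simp add: power_mult_distrib)

lemma nrm2_scale: "nrm2 N (\<lambda>i. c * d i) = (cmod c)\<^sup>2 * nrm2 N d"
  unfolding nrm2_def by (simp add: norm_mult power_mult_distrib sum_distrib_left)

definition cbox1 :: "complex set" where
  "cbox1 = (\<lambda>p. Complex (fst p) (snd p)) ` ({-1..1} \<times> {-1..1})"

lemma compact_cbox1: "compact cbox1"
proof -
  have eq: "(\<lambda>p. Complex (fst p) (snd p)) = (\<lambda>p::real\<times>real. complex_of_real (fst p) + \<i> * complex_of_real (snd p))"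
    by (rule ext) (simp add: complex_eq_iff)
  have cont: "continuous_on ({-1..1} \<times> {-1..1}) (\<lambda>p::real\<times>real. Complex (fst p) (snd p))"
    unfolding eq by (intro continuous_intros)
  show ?thesis unfolding cbox1_def
    by (rule compact_continuous_image[OF cont]) (intro compact_Times compact_Icc)
qed

lemma in_cbox1: "cmod z \<le> 1 \<Longrightarrow> z \<in> cbox1"
proof -
  assume z: "cmod z \<le> 1"
  have "\<bar>Re z\<bar> \<le> 1" "\<bar>Im z\<bar> \<le> 1" using abs_Re_le_cmod[of z] abs_Im_le_cmod[of z] z by linarith+
  then have "(Re z, Im z) \<in> {-1..1} \<times> {-1..1}" by auto
  then show "z \<in> cbox1" unfolding cbox1_def by (intro image_eqI[of _ _ "(Re z, Im z)"]) simp_all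
qed

lemma zero_cbox1[simp]: "0 \<in> cbox1" by (rule in_cbox1) simp
lemma one_cbox1[simp]: "1 \<in> cbox1" by (rule in_cbox1) simp

definition Kset :: "nat \<Rightarrow> (nat \<Rightarrow> complex) set" where
  "Kset N = PiE UNIV (\<lambda>i. if i < N then cbox1 else {0})"

lemma compact_Kset: "compact (Kset N)"
proof -
  have "compactin (product_topology (\<lambda>i. euclidean) UNIV) (Kset N)"
    unfolding Kset_def compactin_PiE using compact_cbox1 by auto
  then show ?thesis unfolding euclidean_product_topology by simp
qed

lemma normalize:
  assumes "nrm2 N d > 0"
  defines "d' \<equiv> (\<lambda>i. if i < N then complex_of_real (1 / sqrt (nrm2 N d)) * d i else 0)"
  shows "d' \<in> Kset N" "nrm2 N d' = 1" "GG x N d' = GG x N d / nrm2 N d"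
proof -
  let ?r = "sqrt (nrm2 N d)"
  have r: "?r > 0" using assms by simp
  have e1: "nrm2 N d' = nrm2 N (\<lambda>i. complex_of_real (1 / ?r) * d i)"
    by (rule nrm2_cong) (simp add: d'_def)
  show n1: "nrm2 N d' = 1" unfolding e1 nrm2_scale using assms by (simp add: norm_divide power_divide)
  have "Sx x N d' = Sx x N (\<lambda>i. complex_of_real (1 / ?r) * d i)"
    by (rule Sx_cong) (simp add: d'_def)
  then have "GG x N d' = GG x N (\<lambda>i. complex_of_real (1 / ?r) * d i)"
    unfolding GG_def by simp
  also have "\<dots> = (cmod (complex_of_real (1 / ?r)))\<^sup>2 * GG x N d" by (rule GG_scale)
  also have "\<dots> = GG x N d / nrm2 N d" using assms by (simp add: norm_divide power_divide)
  finally show "GG x N d' = GG x N d / nrm2 N d" .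
  have "cmod (d' i) \<le> 1" if "i < N" for i
  proof -
    have "(cmod (d' i))\<^sup>2 \<le> nrm2 N d'"
      unfolding nrm2_def by (rule member_le_sum) (use that in auto)
    then have "(cmod (d' i))\<^sup>2 \<le> 1\<^sup>2" using n1 by simp
    then show ?thesis by (rule power2_le_imp_le) simp
  qed
  then have inb: "d' i \<in> (if i < N then cbox1 else {0})" for i
    by (cases "i < N") (auto intro: in_cbox1 simp: d'_def)
  show "d' \<in> Kset N" unfolding Kset_def using inb by (auto simp: PiE_def)
qed

lemma extremizers:
  assumes N: "N \<ge> 1"
  shows "\<exists>d0 d1. nrm2 N d0 = 1 \<and> nrm2 N d1 = 1 \<and>
    (\<forall>d. GG x N d0 * nrm2 N d \<le> GG x N d) \<and> (\<forall>d. GG x N d \<le> GG x N d1 * nrm2 N d)"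
proof -
  define Sph where "Sph = Kset N \<inter> {d. nrm2 N d = 1}"
  have cS: "compact Sph" unfolding Sph_def
    by (intro compact_Int_closed compact_Kset closed_Collect_eq nrm2_cont continuous_intros)
  define e0 :: "nat \<Rightarrow> complex" where "e0 = (\<lambda>i. if i = 0 then 1 else 0)"
  have "e0 \<in> Kset N" unfolding Kset_def e0_def using N by (auto simp: PiE_def intro: in_cbox1)
  moreover have "nrm2 N e0 = 1" unfolding nrm2_def e0_def using N
    by (simp add: if_distrib[of "\<lambda>z. (cmod z)\<^sup>2"] cong: if_cong)
  ultimately have ne: "Sph \<noteq> {}" unfolding Sph_def by blast
  obtain d0 where d0: "d0 \<in> Sph" "\<And>d. d \<in> Sph \<Longrightarrow> GG x N d0 \<le> GG x N d"
    using continuous_attains_inf[OF cS ne GG_cont] by blast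
  obtain d1 where d1: "d1 \<in> Sph" "\<And>d. d \<in> Sph \<Longrightarrow> GG x N d \<le> GG x N d1"
    using continuous_attains_sup[OF cS ne GG_cont] by blast
  have lo: "GG x N d0 * nrm2 N d \<le> GG x N d" for d
  proof (cases "nrm2 N d = 0")
    case True then show ?thesis by (simp add: GG_nrm2_zero)
  next
    case False
    then have pos: "nrm2 N d > 0" using nrm2_nonneg[of N d] by simp
    from normalize(1,2)[OF pos] normalize(3)[OF pos, of x] d0(2)[of "\<lambda>i. if i < N then complex_of_real (1 / sqrt (nrm2 N d)) * d i else 0"]
    have "GG x N d0 \<le> GG x N d / nrm2 N d" unfolding Sph_def by simp
    then show ?thesis using pos by (simp add: field_simps)
  qed
  have hi: "GG x N d \<le> GG x N d1 * nrm2 N d" for d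
  proof (cases "nrm2 N d = 0")
    case True then show ?thesis by (simp add: GG_nrm2_zero)
  next
    case False
    then have pos: "nrm2 N d > 0" using nrm2_nonneg[of N d] by simp
    from normalize(1,2)[OF pos] normalize(3)[OF pos, of x] d1(2)[of "\<lambda>i. if i < N then complex_of_real (1 / sqrt (nrm2 N d)) * d i else 0"]
    have "GG x N d / nrm2 N d \<le> GG x N d1" unfolding Sph_def by simp
    then show ?thesis using pos by (simp add: field_simps)
  qed
  show ?thesis
    using d0(1) d1(1) lo hi unfolding Sph_def by blast
qed

lemma quadform:
  fixes x :: "nat \<Rightarrow> 'a::complex_inner"
  assumes c: "c \<in> carrier_vec N"
  defines "U \<equiv> mat N N (\<lambda>(i, j). cinner (x i) (x j))"
  shows "(U *\<^sub>v c) \<bullet>c c = cinner (Sx x N (\<lambda>i. cnj (c $ i))) (Sx x N (\<lambda>i. cnj (c $ i)))"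
proof -
  have dc: "dim_vec c = N" using c by simp
  have row: "(U *\<^sub>v c) $ i = (\<Sum>j<N. cinner (x i) (x j) * c $ j)" if "i < N" for i
    using that dc unfolding U_def by (simp add: scalar_prod_def atLeast0LessThan)
  have "(U *\<^sub>v c) \<bullet>c c = (\<Sum>i<N. (U *\<^sub>v c) $ i * cnj (c $ i))"
    using dc by (simp add: scalar_prod_def atLeast0LessThan)
  also have "\<dots> = (\<Sum>i<N. (\<Sum>j<N. cinner (x i) (x j) * c $ j) * cnj (c $ i))"
    by (rule sum.cong) (simp_all add: row)
  also have "\<dots> = (\<Sum>i<N. \<Sum>j<N. cnj (c $ i) * cnj (cnj (c $ j)) * cinner (x i) (x j))"
    by (simp add: sum_distrib_left sum_distrib_right mult_ac)
  also have "\<dots> = cinner (Sx x N (\<lambda>i. cnj (c $ i))) (Sx x N (\<lambda>i. cnj (c $ i)))"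
    by (rule inner_Sx[symmetric])
  finally show ?thesis .
qed

lemma nrm2_vec_pos:
  assumes c: "c \<in> carrier_vec N" "c \<noteq> 0\<^sub>v N"
  shows "nrm2 N (\<lambda>i. cnj (c $ i)) > 0"
proof (rule ccontr)
  assume "\<not> ?thesis"
  then have z: "nrm2 N (\<lambda>i. cnj (c $ i)) = 0" using nrm2_nonneg[of N] by (simp add: not_less eq_iff)
  have "c = 0\<^sub>v N"
  proof (rule eq_vecI)
    fix i assume "i < dim_vec (0\<^sub>v N :: complex vec)"
    then have "i < N" by simp
    from nrm2_zero[OF z this] show "c $ i = 0\<^sub>v N $ i" using \<open>i < N\<close> by simp
  qed (use c in simp)
  with c show False by simp
qed

lemma cc_nrm2:
  assumes c: "c \<in> carrier_vec N"
  shows "c \<bullet>c c = complex_of_real (nrm2 N (\<lambda>i. cnj (c $ i)))"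
proof -
  have dc: "dim_vec c = N" using c by simp
  have "c \<bullet>c c = (\<Sum>i<N. c $ i * cnj (c $ i))"
    using dc by (simp add: scalar_prod_def atLeast0LessThan)
  also have "\<dots> = (\<Sum>i<N. complex_of_real ((cmod (cnj (c $ i)))\<^sup>2))"
  proof (rule sum.cong)
    fix i show "c $ i * cnj (c $ i) = complex_of_real ((cmod (cnj (c $ i)))\<^sup>2)"
      using complex_norm_square[of "c $ i"] by simp
  qed simp
  finally show ?thesis unfolding nrm2_def by simp
qed

lemma eig_bounds:
  assumes ev: "eigenvalue (mat N N (\<lambda>(i, j). cinner (x i) (x j))) \<mu>"
    and lo: "\<And>d. m * nrm2 N d \<le> GG x N d" and hi: "\<And>d. GG x N d \<le> M * nrm2 N d"
  shows "\<mu> \<in> \<real> \<and> m \<le> Re \<mu> \<and> Re \<mu> \<le> M"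
proof -
  let ?U = "mat N N (\<lambda>(i, j). cinner (x i) (x j))"
  obtain c where c: "c \<in> carrier_vec N" "c \<noteq> 0\<^sub>v N" "?U *\<^sub>v c = \<mu> \<cdot>\<^sub>v c"
    using ev unfolding eigenvalue_def eigenvector_def by auto
  define d where "d = (\<lambda>i. cnj (c $ i))"
  have pos: "nrm2 N d > 0" unfolding d_def by (rule nrm2_vec_pos[OF c(1,2)])
  have "(?U *\<^sub>v c) \<bullet>c c = \<mu> * (c \<bullet>c c)"
    unfolding c(3) using c(1) by (simp add: smult_scalar_prod_distrib)
  then have "complex_of_real (GG x N d) = \<mu> * complex_of_real (nrm2 N d)"
    using quadform[OF c(1), of x] cc_nrm2[OF c(1)] unfolding d_def GG_def cinner_self by simp
  then have mu: "\<mu> = complex_of_real (GG x N d / nrm2 N d)"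
    using pos by (simp add: field_simps)
  have "m \<le> GG x N d / nrm2 N d" "GG x N d / nrm2 N d \<le> M"
    using lo[of d] hi[of d] pos by (simp_all add: field_simps)
  then show ?thesis unfolding mu by simp
qed

lemma Sx_delta: "k < N \<Longrightarrow> Sx x N (\<lambda>i. if i = k then 1 else 0) = x k"
  unfolding Sx_def by (simp add: if_distrib[of "\<lambda>z. z *\<^sub>C _"] scaleC_one cong: if_cong)

lemma eig_from_var:
  assumes var: "\<And>e. cinner (Sx x N d0) (Sx x N e) = of_real m * (\<Sum>i<N. d0 i * cnj (e i))"
    and n1: "nrm2 N d0 = 1"
  shows "eigenvalue (mat N N (\<lambda>(i, j). cinner (x i) (x j))) (complex_of_real m)"
    and "mat N N (\<lambda>(i, j). cinner (x i) (x j)) *\<^sub>v vec N (\<lambda>i. cnj (d0 i)) = complex_of_real m \<cdot>\<^sub>v vec N (\<lambda>i. cnj (d0 i))"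
proof -
  let ?U = "mat N N (\<lambda>(i, j). cinner (x i) (x j))"
  let ?c = "vec N (\<lambda>i. cnj (d0 i))"
  have k: "cinner (Sx x N d0) (x k) = of_real m * d0 k" if "k < N" for k
  proof -
    have "cinner (Sx x N d0) (x k) = of_real m * (\<Sum>i<N. d0 i * cnj (if i = k then 1 else 0))"
      using var[of "\<lambda>i. if i = k then 1 else 0"] Sx_delta[OF that, of x] by simp
    also have "\<dots> = of_real m * d0 k" using that by (simp add: if_distrib cong: if_cong)
    finally show ?thesis .
  qed
  have eq: "?U *\<^sub>v ?c = complex_of_real m \<cdot>\<^sub>v ?c"
  proof (rule eq_vecI)
    fix k assume "k < dim_vec (complex_of_real m \<cdot>\<^sub>v ?c)"
    then have kN: "k < N" by simp
    have "(?U *\<^sub>v ?c) $ k = (\<Sum>j<N. cinner (x k) (x j) * cnj (d0 j))"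
      using kN by (simp add: scalar_prod_def atLeast0LessThan)
    also have "\<dots> = cnj (\<Sum>j<N. d0 j * cinner (x j) (x k))"
      by (simp add: mult.commute) (rule sum.cong, simp, subst cinner_conj_commute, simp)
    also have "(\<Sum>j<N. d0 j * cinner (x j) (x k)) = cinner (Sx x N d0) (x k)"
      unfolding Sx_def by (simp add: cinner_sum_left cinner_scaleC_left)
    also have "cnj \<dots> = complex_of_real m * cnj (d0 k)" using k[OF kN] by simp
    finally show "(?U *\<^sub>v ?c) $ k = (complex_of_real m \<cdot>\<^sub>v ?c) $ k" using kN by simp
  qed simp
  then show "?U *\<^sub>v ?c = complex_of_real m \<cdot>\<^sub>v ?c" .
  have "?c \<noteq> 0\<^sub>v N"
  proof
    assume z: "?c = 0\<^sub>v N"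
    have "nrm2 N d0 = 0" unfolding nrm2_def
    proof (rule sum.neutral, rule ballI)
      fix i assume "i \<in> {..<N}"
      then have "?c $ i = 0" using z by simp
      then show "(cmod (d0 i))\<^sup>2 = 0" using \<open>i \<in> {..<N}\<close> by simp
    qed
    with n1 show False by simp
  qed
  then show "eigenvalue ?U (complex_of_real m)"
    unfolding eigenvalue_def eigenvector_def using eq by (intro exI[of _ ?c]) simp
qed

lemma mult_cnj_cmod: "z * cnj z = (complex_of_real (cmod z))\<^sup>2"
  using complex_norm_square[of z] by simp

lemma x_orth_tail:
  assumes ons: "ONS v" and j: "N \<le> j"
  shows "cinner (projK v {..<N} y) (v j) = 0"
  unfolding projK_def using ons_sum_inner_v[OF ons, of "{..<N}" "\<lambda>k. cinner y (v k)" j] j by simp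

lemma inner_proj_x:
  assumes ons: "ONS v"
  shows "cinner f (projK v {..<N} y) = cinner (projK v {..<N} f) (projK v {..<N} y)"
proof -
  have "cinner (f - projK v {..<N} f) (projK v {..<N} y) = 0"
    unfolding projK_def[of v _ y] by (rule orth_sum) (rule projK_orth[OF ons], simp_all)
  then show ?thesis by (simp add: cinner_diff_left)
qed

lemma upper_analysis:
  assumes hi: "\<And>d. GG x N d \<le> M * nrm2 N d" and M: "0 \<le> M"
  shows "nrm2 N (\<lambda>j. cinner g (x j)) \<le> M * (norm g)\<^sup>2"
proof -
  define d where "d = (\<lambda>j. cinner g (x j))"
  have "cinner (Sx x N d) g = (\<Sum>j<N. d j * cnj (d j))"
    unfolding Sx_def d_def by (simp add: cinner_sum_left cinner_scaleC_left flip: cinner_conj_commute)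
  also have "\<dots> = complex_of_real (nrm2 N d)"
    unfolding nrm2_def by (simp add: mult_cnj_cmod)
  finally have e: "cinner (Sx x N d) g = complex_of_real (nrm2 N d)" .
  have n0: "0 \<le> nrm2 N d" by (rule nrm2_nonneg)
  have "nrm2 N d \<le> norm (Sx x N d) * norm g"
    using cauchy_schwarz[of "Sx x N d" g] unfolding e using n0 by simp
  then have "(nrm2 N d)\<^sup>2 \<le> (norm (Sx x N d) * norm g)\<^sup>2"
    using n0 by (simp add: power_mono)
  also have "\<dots> = GG x N d * (norm g)\<^sup>2" unfolding GG_def by (simp add: power_mult_distrib)
  also have "\<dots> \<le> M * nrm2 N d * (norm g)\<^sup>2" by (rule mult_right_mono[OF hi]) simp
  finally have "nrm2 N d * nrm2 N d \<le> nrm2 N d * (M * (norm g)\<^sup>2)"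
    by (simp add: power2_eq_square mult_ac)
  then show ?thesis unfolding d_def[symmetric]
    using n0 M by (cases "nrm2 N d = 0") (simp_all add: mult_le_cancel_left)
qed

lemma lower_analysis:
  assumes ons: "ONS v" and lo: "\<And>d. m * nrm2 N d \<le> GG x N d" and m: "0 < m"
    and g: "g = Sx x N e"
  shows "m * (norm g)\<^sup>2 \<le> nrm2 N (\<lambda>j. cinner g (x j))"
proof -
  define d where "d = (\<lambda>j. cinner g (x j))"
  have "cinner g g = (\<Sum>j<N. e j * cnj (d j))"
    unfolding d_def by (subst (1) g) (simp add: Sx_def cinner_sum_left cinner_scaleC_left flip: cinner_conj_commute)
  also have "\<dots> = cinner (Sx v N e) (Sx v N d)"
    unfolding Sx_def by (rule ons_sum_inner[OF ons, symmetric]) simp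
  finally have e1: "cinner g g = cinner (Sx v N e) (Sx v N d)" .
  have ne: "(norm (Sx v N e))\<^sup>2 = nrm2 N e" "(norm (Sx v N d))\<^sup>2 = nrm2 N d"
    unfolding Sx_def nrm2_def by (simp_all add: ons_sum_norm[OF ons])
  have "(norm g)\<^sup>2 = cmod (cinner g g)" by (simp add: cinner_self norm_power)
  also have "\<dots> = cmod (cinner (Sx v N e) (Sx v N d))" using e1 by simp
  also have "\<dots> \<le> norm (Sx v N e) * norm (Sx v N d)" by (rule cauchy_schwarz)
  finally have "(norm g)\<^sup>2 \<le> norm (Sx v N e) * norm (Sx v N d)" .
  then have "((norm g)\<^sup>2)\<^sup>2 \<le> (norm (Sx v N e) * norm (Sx v N d))\<^sup>2"
    by (rule power_mono) simp
  also have "\<dots> = nrm2 N e * nrm2 N d" by (simp add: power_mult_distrib ne)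
  finally have A: "((norm g)\<^sup>2)\<^sup>2 \<le> nrm2 N e * nrm2 N d" .
  have "m * nrm2 N e \<le> (norm g)\<^sup>2" using lo[of e] unfolding GG_def g .
  then have "m * ((norm g)\<^sup>2)\<^sup>2 \<le> (norm g)\<^sup>2 * nrm2 N d"
    using A m nrm2_nonneg[of N d]
    by (smt (verit, best) mult_left_mono mult_right_mono mult.assoc mult.commute)
  then have "(norm g)\<^sup>2 * (m * (norm g)\<^sup>2) \<le> (norm g)\<^sup>2 * nrm2 N d"
    by (simp add: power2_eq_square mult_ac)
  then show ?thesis unfolding d_def[symmetric]
    by (cases "norm g = 0") (simp_all add: nrm2_nonneg mult_le_cancel_left)
qed

lemma analysis:
  assumes ons: "ONS v" and dense: "closure (cspan (range v)) = UNIV"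
    and xdef: "x = (\<lambda>i. projK v {..<N} (w i))"
    and span: "cspan (x ` {..<N}) = cspan (v ` {..<N})"
    and lo: "\<And>d. m * nrm2 N d \<le> GG x N d" and hi: "\<And>d. GG x N d \<le> M * nrm2 N d"
    and m0: "0 < m" and m1: "m \<le> 1" and mM: "m \<le> M"
    and udef: "u = (\<lambda>j. if j < N then x j else v j)"
  shows "(\<lambda>j. (cmod (cinner f (u j)))\<^sup>2) summable_on UNIV \<and>
     m * (norm f)\<^sup>2 \<le> (\<Sum>\<^sub>\<infinity>j. (cmod (cinner f (u j)))\<^sup>2) \<and>
     (\<Sum>\<^sub>\<infinity>j. (cmod (cinner f (u j)))\<^sup>2) \<le> max M 1 * (norm f)\<^sup>2"
proof -
  define g where "g = projK v {..<N} f"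
  define h where "h = (\<lambda>j. (cmod (cinner f (u j)))\<^sup>2)"
  define h' where "h' = (\<lambda>j. (cmod (cinner f (v j)))\<^sup>2)"
  define d where "d = (\<lambda>j. cinner g (x j))"
  have hN: "h j = (cmod (d j))\<^sup>2" if "j < N" for j
    using that unfolding h_def udef d_def g_def xdef by (simp add: inner_proj_x[OF ons, of f])
  have hT: "h j = h' j" if "j \<in> {N..}" for j
    using that unfolding h_def h'_def udef by simp
  have sm': "h' summable_on UNIV" and is': "infsum h' UNIV = (norm f)\<^sup>2"
    unfolding h'_def using parseval[OF ons dense] by auto
  have smT': "h' summable_on {N..}" by (rule summable_on_subset_banach[OF sm']) simp
  have "h summable_on {N..} \<longleftrightarrow> h' summable_on {N..}" by (rule summable_on_cong) (rule hT)
  with smT' have smT: "h summable_on {N..}" by simp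
  have smF: "h summable_on {..<N}" by simp
  have U: "UNIV = {..<N} \<union> {N..}" by auto
  have D: "{..<N} \<inter> {N..} = {}" by auto
  have sm: "h summable_on UNIV" unfolding U by (rule summable_on_Un_disjoint[OF smF smT D])
  have "infsum h UNIV = infsum h {..<N} + infsum h {N..}"
    unfolding U by (rule infsum_Un_disjoint[OF smF smT D])
  moreover have "infsum h {..<N} = nrm2 N d"
    unfolding nrm2_def by (simp add: hN)
  moreover have "infsum h {N..} = infsum h' {N..}" using hT by (rule infsum_cong)
  moreover have "infsum h' UNIV = infsum h' {..<N} + infsum h' {N..}"
    unfolding U by (rule infsum_Un_disjoint[OF _ smT' D]) simp
  moreover have "infsum h' {..<N} = (norm g)\<^sup>2"
    unfolding g_def h'_def by (simp add: projK_norm[OF ons])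
  ultimately have tot: "infsum h UNIV = nrm2 N d + ((norm f)\<^sup>2 - (norm g)\<^sup>2)"
    using is' by simp
  have gf: "(norm g)\<^sup>2 \<le> (norm f)\<^sup>2"
    unfolding g_def using projK_pyth[OF ons, of "{..<N}" f] projK_norm[OF ons, of "{..<N}" f] by simp
  have "g \<in> cspan (v ` {..<N})" unfolding g_def projK_def
    by (rule span_mem[OF _ inj_on_subset[OF ons_inj[OF ons] subset_UNIV]]) simp
  then have "g \<in> cspan (x ` {..<N})" using span by simp
  then obtain e where "g = (\<Sum>i\<in>{..<N}. e i *\<^sub>C x i)" using span_repr[of "{..<N}" g x] by blast
  then have ge: "g = Sx x N e" unfolding Sx_def by simp
  have low: "m * (norm g)\<^sup>2 \<le> nrm2 N d"
    unfolding d_def by (rule lower_analysis[OF ons lo m0 ge])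
  have up: "nrm2 N d \<le> M * (norm g)\<^sup>2"
    unfolding d_def by (rule upper_analysis[OF hi]) (use m0 mM in simp)
  define D where "D = (norm f)\<^sup>2 - (norm g)\<^sup>2"
  have D0: "0 \<le> D" using gf unfolding D_def by simp
  have "m * (norm f)\<^sup>2 = m * (norm g)\<^sup>2 + m * D" unfolding D_def by (simp add: algebra_simps)
  also have "\<dots> \<le> nrm2 N d + D"
    using low mult_right_mono[OF m1 D0] by simp
  finally have L: "m * (norm f)\<^sup>2 \<le> infsum h UNIV" unfolding tot D_def .
  have "nrm2 N d + D \<le> max M 1 * (norm g)\<^sup>2 + max M 1 * D"
    using up mult_right_mono[of M "max M 1" "(norm g)\<^sup>2"] mult_right_mono[of 1 "max M 1" D] D0
    by simp
  also have "\<dots> = max M 1 * (norm f)\<^sup>2" unfolding D_def by (simp add: algebra_simps)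
  finally have R: "infsum h UNIV \<le> max M 1 * (norm f)\<^sup>2" unfolding tot D_def .
  show ?thesis using sm L R unfolding h_def by blast
qed

lemma sum_restrict_N:
  fixes g :: "nat \<Rightarrow> 'b::comm_monoid_add"
  shows "(\<Sum>j\<in>F \<inter> {..<N}. g j) = (\<Sum>j<N. if j \<in> F then g j else 0)"
proof -
  have "F \<inter> {..<N} = {..<N} \<inter> F" by auto
  then show ?thesis by (simp add: sum.inter_restrict)
qed

lemma synthesis:
  assumes ons: "ONS v"
    and xdef: "x = (\<lambda>i. projK v {..<N} (w i))"
    and lo: "\<And>d. m * nrm2 N d \<le> GG x N d" and hi: "\<And>d. GG x N d \<le> M * nrm2 N d"
    and m1: "m \<le> 1" and mM: "m \<le> M"
    and udef: "u = (\<lambda>j. if j < N then x j else v j)"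
    and F: "finite F"
  shows "m * (\<Sum>j\<in>F. (cmod (a j))\<^sup>2) \<le> (norm (\<Sum>j\<in>F. a j *\<^sub>C u j))\<^sup>2 \<and>
         (norm (\<Sum>j\<in>F. a j *\<^sub>C u j))\<^sup>2 \<le> max M 1 * (\<Sum>j\<in>F. (cmod (a j))\<^sup>2)"
proof -
  define F1 where "F1 = F \<inter> {..<N}"
  define F2 where "F2 = F - {..<N}"
  define a' where "a' = (\<lambda>j. if j \<in> F then a j else 0)"
  have fF2: "finite F2" unfolding F2_def using F by simp
  have split: "(\<Sum>j\<in>F. a j *\<^sub>C u j) = (\<Sum>j\<in>F1. a j *\<^sub>C u j) + (\<Sum>j\<in>F2. a j *\<^sub>C u j)"
    unfolding F1_def F2_def by (rule sum.Int_Diff[OF F])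
  have splitn: "(\<Sum>j\<in>F. (cmod (a j))\<^sup>2) = (\<Sum>j\<in>F1. (cmod (a j))\<^sup>2) + (\<Sum>j\<in>F2. (cmod (a j))\<^sup>2)"
    unfolding F1_def F2_def by (rule sum.Int_Diff[OF F])
  have S1: "(\<Sum>j\<in>F1. a j *\<^sub>C u j) = Sx x N a'"
  proof -
    have "(\<Sum>j\<in>F1. a j *\<^sub>C u j) = (\<Sum>j\<in>F1. a j *\<^sub>C x j)"
      by (rule sum.cong) (simp_all add: F1_def udef)
    also have "\<dots> = (\<Sum>j<N. if j \<in> F then a j *\<^sub>C x j else 0)"
      unfolding F1_def by (rule sum_restrict_N)
    also have "\<dots> = Sx x N a'"
      unfolding Sx_def a'_def by (rule sum.cong) simp_all
    finally show ?thesis .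
  qed
  have S2: "(\<Sum>j\<in>F2. a j *\<^sub>C u j) = (\<Sum>j\<in>F2. a j *\<^sub>C v j)"
    by (rule sum.cong) (simp_all add: F2_def udef)
  have n1: "(\<Sum>j\<in>F1. (cmod (a j))\<^sup>2) = nrm2 N a'"
  proof -
    have "(\<Sum>j\<in>F1. (cmod (a j))\<^sup>2) = (\<Sum>j<N. if j \<in> F then (cmod (a j))\<^sup>2 else 0)"
      unfolding F1_def by (rule sum_restrict_N)
    also have "\<dots> = nrm2 N a'"
      unfolding nrm2_def a'_def by (rule sum.cong) simp_all
    finally show ?thesis .
  qed
  have orth: "cinner (Sx x N a') (\<Sum>j\<in>F2. a j *\<^sub>C v j) = 0"
  proof (rule orth_sum)
    fix k assume "k \<in> F2"
    then have kN: "N \<le> k" unfolding F2_def by auto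
    show "cinner (Sx x N a') (v k) = 0"
      unfolding Sx_def xdef
      by (simp add: cinner_sum_left cinner_scaleC_left x_orth_tail[OF ons kN])
  qed
  have nsum: "(norm (\<Sum>j\<in>F. a j *\<^sub>C u j))\<^sup>2 = GG x N a' + (\<Sum>j\<in>F2. (cmod (a j))\<^sup>2)"
    unfolding split S1 S2 pythagoras[OF orth] GG_def ons_sum_norm[OF ons fF2] ..
  define n2 where "n2 = (\<Sum>j\<in>F2. (cmod (a j))\<^sup>2)"
  have n20: "0 \<le> n2" unfolding n2_def by (simp add: sum_nonneg)
  have na0: "0 \<le> nrm2 N a'" by (rule nrm2_nonneg)
  have L: "m * (nrm2 N a' + n2) \<le> GG x N a' + n2"
    using lo[of a'] mult_right_mono[OF m1 n20] by (simp add: algebra_simps)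
  have R: "GG x N a' + n2 \<le> max M 1 * (nrm2 N a' + n2)"
    using hi[of a'] mult_right_mono[of M "max M 1" "nrm2 N a'"] mult_right_mono[of 1 "max M 1" n2] n20 na0
    by (simp add: algebra_simps)
  show ?thesis unfolding nsum splitn n1 using L R unfolding n2_def by simp
qed

theorem mainTheorem5:
  fixes v w :: "nat \<Rightarrow> 'a::chilbert_space" and N :: nat
    and p :: "'a \<Rightarrow> 'a" and u :: "nat \<Rightarrow> 'a" and U :: "complex mat"
    and Q :: "complex vec \<Rightarrow> real" and S :: "real set"
  assumes N: "N \<ge> 1"
    and onb: "orthonormal_basis v"
    and unit: "\<And>j. norm (w j) = 1"
    and p_def: "p = orth_proj (cspan (v ` {..<N}))"
    and basis: "is_finite_basis_of N (\<lambda>i. p (w i)) (cspan (v ` {..<N}))"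
    and u_def: "u = (\<lambda>j. if j < N then p (w j) else v j)"
    and U_def: "U = mat N N (\<lambda>(i, j). cinner (p (w i)) (p (w j)))"
    and Q_def: "Q = (\<lambda>c. Re ((U *\<^sub>v c) \<bullet>c c) + 1 - (\<Sum>i<N. (cmod (c $ i))\<^sup>2))"
    and S_def: "S = Q ` {c \<in> carrier_vec N. (\<Sum>i<N. (cmod (c $ i))\<^sup>2) \<le> 1}"
  shows "riesz_basis u \<and>
    (\<exists>At Bt. optimal_lower_constant u At \<and> optimal_upper_constant u Bt \<and>
       Bt \<in> S \<and> (\<forall>x\<in>S. x \<le> Bt) \<and> At \<in> S \<and> (\<forall>x\<in>S. At \<le> x) \<and>
       (\<exists>LamN lamN::real. eigenvalue U (complex_of_real LamN) \<and> eigenvalue U (complex_of_real lamN) \<and>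
          (\<forall>\<mu>. eigenvalue U \<mu> \<longrightarrow> \<mu> \<in> \<real> \<and> lamN \<le> Re \<mu> \<and> Re \<mu> \<le> LamN) \<and>
          Bt = max LamN 1 \<and> At = lamN))"
proof -
  have ons: "ONS v" and dense: "closure (cspan (range v)) = UNIV"
    using onb unfolding orthonormal_basis_def ONS_def by auto
  have pP: "p = projK v {..<N}"
    unfolding p_def by (rule ext) (rule orth_proj_eq[OF ons], simp)
  define x where "x = (\<lambda>i. p (w i))"
  have xdef: "x = (\<lambda>i. projK v {..<N} (w i))" using pP x_def by simp
  have U': "U = mat N N (\<lambda>(i, j). cinner (x i) (x j))" unfolding U_def x_def ..
  have u': "u = (\<lambda>j. if j < N then x j else v j)" unfolding u_def x_def ..
  have span: "cspan (x ` {..<N}) = cspan (v ` {..<N})"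
    and indep: "\<And>a. (\<Sum>i<N. a i *\<^sub>C x i) = 0 \<Longrightarrow> (\<forall>i<N. a i = 0)"
    using basis unfolding is_finite_basis_of_def x_def by auto
  obtain d0 d1 where n0: "nrm2 N d0 = 1" and n1: "nrm2 N d1 = 1"
    and lo0: "\<forall>d. GG x N d0 * nrm2 N d \<le> GG x N d" and hi1: "\<forall>d. GG x N d \<le> GG x N d1 * nrm2 N d"
    using extremizers[OF N, of x] by blast
  define m where "m = GG x N d0"
  define M where "M = GG x N d1"
  have lo: "\<And>d. m * nrm2 N d \<le> GG x N d" using lo0 unfolding m_def by blast
  have hi: "\<And>d. GG x N d \<le> M * nrm2 N d" using hi1 unfolding M_def by blast
  have mM: "m \<le> M" using lo[of d1] n1 unfolding M_def by simp
  have m0: "0 < m"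
  proof -
    have "m \<noteq> 0"
    proof
      assume "m = 0"
      then have "Sx x N d0 = 0" unfolding m_def GG_def by simp
      then have "\<forall>i<N. d0 i = 0" using indep[of d0] unfolding Sx_def by simp
      then have "nrm2 N d0 = 0" unfolding nrm2_def by simp
      with n0 show False by simp
    qed
    moreover have "0 \<le> m" unfolding m_def GG_def by simp
    ultimately show ?thesis by simp
  qed
  have m1: "m \<le> 1"
  proof -
    define e0 :: "nat \<Rightarrow> complex" where "e0 = (\<lambda>i. if i = 0 then 1 else 0)"
    have "nrm2 N e0 = 1" unfolding nrm2_def e0_def using N
      by (simp add: if_distrib[of "\<lambda>z. (cmod z)\<^sup>2"] cong: if_cong)
    moreover have "GG x N e0 = (norm (x 0))\<^sup>2"
      unfolding GG_def e0_def using Sx_delta[of 0 N x] N by simp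
    moreover have "(norm (x 0))\<^sup>2 \<le> 1"
    proof -
      have "(norm (x 0))\<^sup>2 = (\<Sum>k<N. (cmod (cinner (w 0) (v k)))\<^sup>2)"
        unfolding xdef by (simp add: projK_norm[OF ons])
      also have "\<dots> \<le> (norm (w 0))\<^sup>2" by (rule bessel[OF ons]) simp
      finally show ?thesis using unit[of 0] by simp
    qed
    ultimately show ?thesis using lo[of e0] by simp
  qed
  have var0: "\<And>e. cinner (Sx x N d0) (Sx x N e) = of_real m * (\<Sum>i<N. d0 i * cnj (e i))"
    by (rule variational[of 1]) (use lo n0 in \<open>simp_all add: m_def\<close>)
  have var1: "\<And>e. cinner (Sx x N d1) (Sx x N e) = of_real M * (\<Sum>i<N. d1 i * cnj (e i))"
    by (rule variational[of "-1"]) (use hi n1 in \<open>simp_all add: M_def\<close>)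
  note eig0 = eig_from_var[OF var0 n0]
  note eig1 = eig_from_var[OF var1 n1]
  have evb: "\<forall>\<mu>. eigenvalue U \<mu> \<longrightarrow> \<mu> \<in> \<real> \<and> m \<le> Re \<mu> \<and> Re \<mu> \<le> M"
    unfolding U' using eig_bounds[OF _ lo hi] by blast
  have RB: "riesz_bounds u m (max M 1)"
    unfolding riesz_bounds_def
  proof (intro conjI allI impI)
    show "0 < m" by (rule m0)
    show "m \<le> max M 1" using mM by simp
  next
    fix f
    note A = analysis[OF ons dense xdef span lo hi m0 m1 mM u', of f]
    show "(\<lambda>j. (cmod (cinner f (u j)))\<^sup>2) summable_on UNIV" using A by blast
    show "m * (norm f)\<^sup>2 \<le> (\<Sum>\<^sub>\<infinity>j. (cmod (cinner f (u j)))\<^sup>2)" using A by blast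
    show "(\<Sum>\<^sub>\<infinity>j. (cmod (cinner f (u j)))\<^sup>2) \<le> max M 1 * (norm f)\<^sup>2" using A by blast
  next
    fix F :: "nat set" and a assume F: "finite F"
    note B = synthesis[OF ons xdef lo hi m1 mM u' F, of a]
    show "m * (\<Sum>j\<in>F. (cmod (a j))\<^sup>2) \<le> (norm (\<Sum>j\<in>F. a j *\<^sub>C u j))\<^sup>2" using B by blast
    show "(norm (\<Sum>j\<in>F. a j *\<^sub>C u j))\<^sup>2 \<le> max M 1 * (\<Sum>j\<in>F. (cmod (a j))\<^sup>2)" using B by blast
  qed
  have Sxu: "(\<Sum>j<N. d j *\<^sub>C u j) = Sx x N d" for d
    unfolding Sx_def u' by (rule sum.cong) simp_all
  have optL: "optimal_lower_constant u m"
    unfolding optimal_lower_constant_def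
  proof (intro conjI allI impI)
    show "\<exists>B. riesz_bounds u m B" using RB by blast
  next
    fix A' B' assume "riesz_bounds u A' B'"
    then have syn: "\<And>F a. finite F \<Longrightarrow> A' * (\<Sum>j\<in>F. (cmod (a j))\<^sup>2) \<le> (norm (\<Sum>j\<in>F. a j *\<^sub>C u j))\<^sup>2"
      unfolding riesz_bounds_def by blast
    have "A' * (\<Sum>j\<in>{..<N}. (cmod (d0 j))\<^sup>2) \<le> (norm (\<Sum>j\<in>{..<N}. d0 j *\<^sub>C u j))\<^sup>2"
      by (rule syn) simp
    then show "A' \<le> m" using n0 unfolding Sxu nrm2_def m_def GG_def by simp
  qed
  have optU: "optimal_upper_constant u (max M 1)"
    unfolding optimal_upper_constant_def
  proof (intro conjI allI impI)
    show "\<exists>A. riesz_bounds u A (max M 1)" using RB by blast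
  next
    fix A' B' assume rb: "riesz_bounds u A' B'"
    then have syn: "\<And>F a. finite F \<Longrightarrow> (norm (\<Sum>j\<in>F. a j *\<^sub>C u j))\<^sup>2 \<le> B' * (\<Sum>j\<in>F. (cmod (a j))\<^sup>2)"
      unfolding riesz_bounds_def by blast
    have "(norm (\<Sum>j\<in>{..<N}. d1 j *\<^sub>C u j))\<^sup>2 \<le> B' * (\<Sum>j\<in>{..<N}. (cmod (d1 j))\<^sup>2)"
      by (rule syn) simp
    then have MB: "M \<le> B'" using n1 unfolding Sxu nrm2_def M_def GG_def by simp
    have "(norm (\<Sum>j\<in>{N}. (\<lambda>_. 1::complex) j *\<^sub>C u j))\<^sup>2 \<le> B' * (\<Sum>j\<in>{N}. (cmod ((\<lambda>_. 1::complex) j))\<^sup>2)"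
      by (rule syn[of "{N}" "\<lambda>_. 1"]) simp
    moreover have "(norm (v N))\<^sup>2 = 1" using ons unfolding ONS_def by (simp add: norm_sq_Re)
    ultimately have "1 \<le> B'" unfolding u' by (simp add: scaleC_one)
    with MB show "max M 1 \<le> B'" by simp
  qed
  have Qform: "Q c = GG x N (\<lambda>i. cnj (c $ i)) + 1 - nrm2 N (\<lambda>i. cnj (c $ i))" if c: "c \<in> carrier_vec N" for c
  proof -
    have "Re ((U *\<^sub>v c) \<bullet>c c) = GG x N (\<lambda>i. cnj (c $ i))"
      unfolding U' quadform[OF c, of x] GG_def norm_sq_Re ..
    moreover have "(\<Sum>i<N. (cmod (c $ i))\<^sup>2) = nrm2 N (\<lambda>i. cnj (c $ i))"
      unfolding nrm2_def by simp
    ultimately show ?thesis unfolding Q_def by simp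
  qed
  have Qvec: "Q (vec N (\<lambda>i. cnj (d i))) = GG x N d + 1 - nrm2 N d" for d
  proof -
    have "GG x N (\<lambda>i. cnj (vec N (\<lambda>i. cnj (d i)) $ i)) = GG x N d"
      unfolding GG_def by (subst Sx_cong[of N _ d]) simp_all
    moreover have "nrm2 N (\<lambda>i. cnj (vec N (\<lambda>i. cnj (d i)) $ i)) = nrm2 N d"
      by (rule nrm2_cong) simp
    ultimately show ?thesis using Qform[of "vec N (\<lambda>i. cnj (d i))"] by simp
  qed
  have inS: "Q (vec N (\<lambda>i. cnj (d i))) \<in> S" if "nrm2 N d = 1" for d
  proof -
    have "(\<Sum>i<N. (cmod (vec N (\<lambda>i. cnj (d i)) $ i))\<^sup>2) = nrm2 N d"
      unfolding nrm2_def by (rule sum.cong) simp_all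
    then show ?thesis unfolding S_def using that by (intro imageI) simp
  qed
  have mS: "m \<in> S" using inS[OF n0] Qvec[of d0] n0 unfolding m_def by simp
  have BS: "max M 1 \<in> S"
  proof (cases "1 \<le> M")
    case True
    then show ?thesis using inS[OF n1] Qvec[of d1] n1 unfolding M_def by simp
  next
    case False
    have z: "Q (0\<^sub>v N) = 1"
    proof -
      have "GG x N (\<lambda>i. cnj (0\<^sub>v N $ i)) = GG x N (\<lambda>i. 0)"
        unfolding GG_def by (subst Sx_cong[of N _ "\<lambda>i. 0"]) simp_all
      moreover have "nrm2 N (\<lambda>i. cnj (0\<^sub>v N $ i)) = nrm2 N (\<lambda>i. 0)"
        by (rule nrm2_cong) simp
      ultimately show ?thesis using Qform[of "0\<^sub>v N"] by (simp add: GG_def Sx_def nrm2_def)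
    qed
    have "Q (0\<^sub>v N) \<in> S" unfolding S_def by (intro imageI) simp
    with z False show ?thesis by simp
  qed
  have Sbounds: "m \<le> y \<and> y \<le> max M 1" if yS: "y \<in> S" for y
  proof -
    obtain c where c: "c \<in> carrier_vec N" "(\<Sum>i<N. (cmod (c $ i))\<^sup>2) \<le> 1" and y: "y = Q c"
      using yS unfolding S_def by blast
    define d where "d = (\<lambda>i. cnj (c $ i))"
    have n: "nrm2 N d \<le> 1" using c(2) unfolding d_def nrm2_def by simp
    have n00: "0 \<le> nrm2 N d" by (rule nrm2_nonneg)
    have yq: "y = GG x N d + 1 - nrm2 N d" unfolding y d_def by (rule Qform[OF c(1)])
    have "0 \<le> (1 - nrm2 N d) * (1 - m)" using n m1 by simp
    then have "m \<le> m * nrm2 N d + 1 - nrm2 N d" by (simp add: algebra_simps)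
    also have "\<dots> \<le> y" unfolding yq using lo[of d] by simp
    finally have L: "m \<le> y" .
    have "y \<le> M * nrm2 N d + 1 - nrm2 N d" unfolding yq using hi[of d] by simp
    also have "\<dots> \<le> max M 1"
    proof (cases "1 \<le> M")
      case True
      have "(M - 1) * nrm2 N d \<le> (M - 1) * 1" using n True by (intro mult_left_mono) simp_all
      then show ?thesis using True by (simp add: algebra_simps)
    next
      case False
      have "(M - 1) * nrm2 N d \<le> 0" using n00 False by (simp add: mult_nonpos_nonneg)
      then show ?thesis using False by (simp add: algebra_simps)
    qed
    finally show ?thesis using L by simp
  qed
  have eU0: "eigenvalue U (complex_of_real m)" unfolding U' by (rule eig0(1))
  have eU1: "eigenvalue U (complex_of_real M)" unfolding U' by (rule eig1(1))
  show ?thesis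
  proof (intro conjI exI)
    show "riesz_basis u" unfolding riesz_basis_def using RB by blast
    show "optimal_lower_constant u m" by (rule optL)
    show "optimal_upper_constant u (max M 1)" by (rule optU)
    show "max M 1 \<in> S" by (rule BS)
    show "\<forall>x\<in>S. x \<le> max M 1" using Sbounds by blast
    show "m \<in> S" by (rule mS)
    show "\<forall>x\<in>S. m \<le> x" using Sbounds by blast
    show "eigenvalue U (complex_of_real M)" by (rule eU1)
    show "eigenvalue U (complex_of_real m)" by (rule eU0)
    show "\<forall>\<mu>. eigenvalue U \<mu> \<longrightarrow> \<mu> \<in> \<real> \<and> m \<le> Re \<mu> \<and> Re \<mu> \<le> M" by (rule evb)
  qed simp_all
qed

end
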